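(* Let $\mu\in (-1,1)$ and $$\tilde{M} = \begin{pmatrix} 1 & i\mu \\ -i\mu & 1 \end{pmatrix}.$$ Then for every $k\in \mathbb{N}$, $\lambda_{\min}\big(\mathrm{Re}(\tilde{M}^{\otimes k})\big) \ge (1-\mu^2)^{k/2}$.
   Context: $\tilde M^{\otimes k}$ is the $k$-fold Kronecker (tensor) power, $\mathrm{Re}(\cdot)$ denotes the entrywise real part of a complex matrix (which here is a real symmetric matrix), and $\lambda_{\min}$ denotes the smallest eigenvalue. *)

theory Defs
  imports Complex_Main "Jordan_Normal_Form.Matrix" "Jordan_Normal_Form.Char_Poly"
begin

definition kron :: "'a::times mat \<Rightarrow> 'a mat \<Rightarrow> 'a mat" where
  "kron A B = mat (dim_row A * dim_row B) (dim_col A * dim_col B)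
     (\<lambda>(i,j). A $$ (i div dim_row B, j div dim_col B) * B $$ (i mod dim_row B, j mod dim_col B))"

fun kron_pow :: "'a::{times,zero,one} mat \<Rightarrow> nat \<Rightarrow> 'a mat" where
  "kron_pow A 0 = 1\<^sub>m 1"
| "kron_pow A (Suc k) = kron A (kron_pow A k)"

definition Re_mat :: "complex mat \<Rightarrow> real mat" where
  "Re_mat A = map_mat Re A"

definition lambda_min :: "real mat \<Rightarrow> real" where
  "lambda_min A = Min {x. eigenvalue A x}"

definition Mtilde :: "real \<Rightarrow> complex mat" where
  "Mtilde \<mu> = mat_of_rows_list 2 [[1, \<i> * complex_of_real \<mu>], [- \<i> * complex_of_real \<mu>, 1]]"

end

theory Submission
  imports Defs
begin

lemma sum_div_mod_split: fixes m n :: nat shows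
  "(\<Sum>l\<in>{0..<m*n}. g l) = (\<Sum>a\<in>{0..<m}. \<Sum>b\<in>{0..<n}. g (a*n+b))"
proof (induction m)
  case 0 then show ?case by simp
next
  case (Suc m)
  have "{0..<Suc m * n} = {0..<m*n} \<union> {m*n..<m*n+n}" by (auto simp: algebra_simps)
  then have "(\<Sum>l\<in>{0..<Suc m*n}. g l) = (\<Sum>l\<in>{0..<m*n}. g l) + (\<Sum>l\<in>{m*n..<m*n+n}. g l)"
    by (simp add: sum.union_disjoint ivl_disj_int)
  also have "(\<Sum>l\<in>{m*n..<m*n+n}. g l) = (\<Sum>b\<in>{0..<n}. g (m*n+b))"
    using sum.shift_bounds_nat_ivl[of g 0 "m*n" n] by (simp add: add.commute)
  finally show ?case using Suc by simp
qed

lemma kron_carrier[simp]: "kron A B \<in> carrier_mat (dim_row A * dim_row B) (dim_col A * dim_col B)"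
  unfolding kron_def by simp

lemma dim_kron[simp]: "dim_row (kron A B) = dim_row A * dim_row B" "dim_col (kron A B) = dim_col A * dim_col B"
  unfolding kron_def by simp_all

lemma index_kron[simp]: "i < dim_row A * dim_row B \<Longrightarrow> j < dim_col A * dim_col B \<Longrightarrow>
  kron A B $$ (i,j) = A $$ (i div dim_row B, j div dim_col B) * B $$ (i mod dim_row B, j mod dim_col B)"
  unfolding kron_def by simp

lemma kron_mult:
  fixes A B C D :: "'a::comm_semiring_1 mat"
  assumes A: "A \<in> carrier_mat m n" and B: "B \<in> carrier_mat p q"
    and C: "C \<in> carrier_mat n r" and D: "D \<in> carrier_mat q s"
  shows "kron A B * kron C D = kron (A * C) (B * D)"
proof (rule eq_matI)
  fix i j assume i: "i < dim_row (kron (A * C) (B * D))" and j: "j < dim_col (kron (A * C) (B * D))"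
  from i j A B C D have i': "i < m * p" and j': "j < r * s" by auto
  have p0: "p > 0" using i' by (cases p) auto
  have s0: "s > 0" using j' by (cases s) auto
  have idiv: "i div p < m" using i' p0 by (simp add: less_mult_imp_div_less)
  have jdiv: "j div s < r" using j' s0 by (simp add: less_mult_imp_div_less)
  have "(kron A B * kron C D) $$ (i,j) = (\<Sum>l\<in>{0..<n*q}. kron A B $$ (i,l) * kron C D $$ (l,j))"
    using i' j' A B C D by (simp add: times_mat_def scalar_prod_def)
  also have "\<dots> = (\<Sum>a\<in>{0..<n}. \<Sum>b\<in>{0..<q}. kron A B $$ (i,a*q+b) * kron C D $$ (a*q+b,j))"
    by (rule sum_div_mod_split)
  also have "\<dots> = (\<Sum>a\<in>{0..<n}. \<Sum>b\<in>{0..<q}. (A $$ (i div p, a) * C $$ (a, j div s)) * (B $$ (i mod p, b) * D $$ (b, j mod s)))"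
  proof (intro sum.cong refl)
    fix a b assume a: "a \<in> {0..<n}" and b: "b \<in> {0..<q}"
    have lt: "a*q+b < n*q"
    proof -
      have "a*q+b < a*q+q" using b by simp
      also have "\<dots> = (a+1)*q" by simp
      also have "\<dots> \<le> n*q" using a by (intro mult_right_mono) auto
      finally show ?thesis .
    qed
    have d1: "(a*q+b) div q = a" and d2: "(a*q+b) mod q = b" using b by auto
    show "kron A B $$ (i,a*q+b) * kron C D $$ (a*q+b,j) = (A $$ (i div p, a) * C $$ (a, j div s)) * (B $$ (i mod p, b) * D $$ (b, j mod s))"
      using i' j' lt A B C D d1 d2 by (simp add: ac_simps)
  qed
  also have "\<dots> = (\<Sum>a\<in>{0..<n}. A $$ (i div p, a) * C $$ (a, j div s)) * (\<Sum>b\<in>{0..<q}. B $$ (i mod p, b) * D $$ (b, j mod s))"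
    by (simp add: sum_product)
  also have "\<dots> = kron (A * C) (B * D) $$ (i,j)"
    using i' j' A B C D idiv jdiv p0 s0 by (simp add: times_mat_def scalar_prod_def)
  finally show "(kron A B * kron C D) $$ (i,j) = kron (A * C) (B * D) $$ (i,j)" .
qed (use A B C D in auto)

lemma kron_transpose: "transpose_mat (kron A B) = kron (transpose_mat A) (transpose_mat B)"
proof (rule eq_matI)
  fix i j assume "i < dim_row (kron A\<^sup>T B\<^sup>T)" "j < dim_col (kron A\<^sup>T B\<^sup>T)"
  then have i: "i < dim_col A * dim_col B" and j: "j < dim_row A * dim_row B" by auto
  have p0: "dim_col B > 0" using i by (cases "dim_col B") auto
  have s0: "dim_row B > 0" using j by (cases "dim_row B") auto
  have "i div dim_col B < dim_col A" using i p0 by (simp add: less_mult_imp_div_less)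
  moreover have "j div dim_row B < dim_row A" using j s0 by (simp add: less_mult_imp_div_less)
  ultimately show "(kron A B)\<^sup>T $$ (i, j) = kron A\<^sup>T B\<^sup>T $$ (i, j)"
    using i j p0 s0 by simp
qed auto

lemma kron_map:
  assumes "\<And>x y. f (x * y) = f x * f y"
  shows "map_mat f (kron A B) = kron (map_mat f A) (map_mat f B)"
proof (rule eq_matI)
  fix i j assume "i < dim_row (kron (map_mat f A) (map_mat f B))" "j < dim_col (kron (map_mat f A) (map_mat f B))"
  then have i: "i < dim_row A * dim_row B" and j: "j < dim_col A * dim_col B" by auto
  have p0: "dim_row B > 0" using i by (cases "dim_row B") auto
  have s0: "dim_col B > 0" using j by (cases "dim_col B") auto
  have "i div dim_row B < dim_row A" using i p0 by (simp add: less_mult_imp_div_less)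
  moreover have "j div dim_col B < dim_col A" using j s0 by (simp add: less_mult_imp_div_less)
  ultimately show "map_mat f (kron A B) $$ (i, j) = kron (map_mat f A) (map_mat f B) $$ (i, j)"
    using i j p0 s0 assms by simp
qed auto

lemma kron_one: "kron (1\<^sub>m m :: 'a::semiring_1 mat) (1\<^sub>m n) = 1\<^sub>m (m*n)"
proof (rule eq_matI)
  fix i j assume "i < dim_row (1\<^sub>m (m*n) :: 'a mat)" "j < dim_col (1\<^sub>m (m*n) :: 'a mat)"
  then have i: "i < m*n" and j: "j < m*n" by auto
  have n0: "n > 0" using i by (cases n) auto
  have iff: "(i div n = j div n \<and> i mod n = j mod n) \<longleftrightarrow> i = j"
    by (metis div_mult_mod_eq)
  have "i div n < m" "j div n < m" using i j n0 by (simp_all add: less_mult_imp_div_less)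
  then show "kron (1\<^sub>m m) (1\<^sub>m n) $$ (i, j) = (1\<^sub>m (m*n) :: 'a mat) $$ (i, j)"
    using i j n0 iff by auto
qed auto

lemma div_bound: "(i::nat) < a * b \<Longrightarrow> i div b < a"
  by (metis less_mult_imp_div_less mult_zero_right not_less_zero)

lemma kron_smult: "kron (a \<cdot>\<^sub>m A) (b \<cdot>\<^sub>m B) = ((a * b)::'a::comm_semiring_1) \<cdot>\<^sub>m kron A B"
proof (rule eq_matI)
  fix i j assume "i < dim_row ((a * b) \<cdot>\<^sub>m kron A B)" "j < dim_col ((a * b) \<cdot>\<^sub>m kron A B)"
  then have i: "i < dim_row A * dim_row B" and j: "j < dim_col A * dim_col B" by auto
  have p0: "dim_row B > 0" using i by (cases "dim_row B") auto
  have s0: "dim_col B > 0" using j by (cases "dim_col B") auto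
  show "kron (a \<cdot>\<^sub>m A) (b \<cdot>\<^sub>m B) $$ (i, j) = ((a * b) \<cdot>\<^sub>m kron A B) $$ (i, j)"
    using i j p0 s0 div_bound[OF i] div_bound[OF j] by (simp add: ac_simps)
qed auto

lemma kron_pow_carrier: "M \<in> carrier_mat 2 2 \<Longrightarrow> kron_pow M k \<in> carrier_mat (2^k) (2^k)"
proof (induction k)
  case (Suc k)
  then have "dim_row (kron_pow M k) = 2^k" "dim_col (kron_pow M k) = 2^k" by auto
  moreover have "dim_row M = 2" "dim_col M = 2" using Suc.prems by auto
  ultimately show ?case unfolding carrier_mat_def by simp
qed simp

definition adj :: "complex mat \<Rightarrow> complex mat" where
  "adj X = transpose_mat (map_mat cnj X)"

definition Lchol :: "real \<Rightarrow> complex mat" where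
  "Lchol \<mu> = mat_of_rows_list 2 [[1, \<i> * complex_of_real \<mu>], [0, complex_of_real (sqrt (1 - \<mu>^2))]]"

lemma mrl_carrier: "mat_of_rows_list n xs \<in> carrier_mat (length xs) n"
  unfolding mat_of_rows_list_def by (rule mat_carrier)

lemma Mtilde_carrier: "Mtilde \<mu> \<in> carrier_mat 2 2"
  unfolding Mtilde_def using mrl_carrier[of 2 "[[1, \<i> * complex_of_real \<mu>], [- \<i> * complex_of_real \<mu>, 1]]"]
  by (simp only: list.size numeral_2_eq_2 add_0 add_Suc)

lemma Lchol_carrier: "Lchol \<mu> \<in> carrier_mat 2 2"
  unfolding Lchol_def using mrl_carrier[of 2 "[[1, \<i> * complex_of_real \<mu>], [0, complex_of_real (sqrt (1 - \<mu>^2))]]"]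
  by (simp only: list.size numeral_2_eq_2 add_0 add_Suc)

lemma mat2_eqI:
  assumes "A \<in> carrier_mat 2 2" "B \<in> carrier_mat 2 2"
   "A $$ (0,0) = B $$ (0,0)" "A $$ (0,1) = B $$ (0,1)" "A $$ (1,0) = B $$ (1,0)" "A $$ (1,1) = B $$ (1,1)"
  shows "A = B"
proof (rule eq_matI)
  fix i j assume "i < dim_row B" "j < dim_col B"
  then have "i < 2" "j < 2" using assms by auto
  then have "i = 0 \<or> i = 1" "j = 0 \<or> j = 1" by auto
  then show "A $$ (i,j) = B $$ (i,j)" using assms by auto
qed (use assms in auto)

lemma sum2: "(\<Sum>i\<in>{0..<2::nat}. f i) = f 0 + f 1"
  by (simp add: numeral_2_eq_2)

lemma Mtilde_idx: "Mtilde \<mu> $$ (0,0) = 1" "Mtilde \<mu> $$ (0,1) = \<i> * \<mu>"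
   "Mtilde \<mu> $$ (1,0) = - \<i> * \<mu>" "Mtilde \<mu> $$ (1,1) = 1"
   "Mtilde \<mu> $$ (0,Suc 0) = \<i> * \<mu>"
   "Mtilde \<mu> $$ (Suc 0,0) = - \<i> * \<mu>" "Mtilde \<mu> $$ (Suc 0,Suc 0) = 1"
  by (simp_all add: Mtilde_def mat_of_rows_list_def)

lemma Lchol_idx: "Lchol \<mu> $$ (0,0) = 1" "Lchol \<mu> $$ (0,1) = \<i> * \<mu>"
   "Lchol \<mu> $$ (1,0) = 0" "Lchol \<mu> $$ (1,1) = sqrt (1 - \<mu>^2)"
   "Lchol \<mu> $$ (0,Suc 0) = \<i> * \<mu>"
   "Lchol \<mu> $$ (Suc 0,0) = 0" "Lchol \<mu> $$ (Suc 0,Suc 0) = sqrt (1 - \<mu>^2)"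
  by (simp_all add: Lchol_def mat_of_rows_list_def)

lemma mult2_idx: assumes "A \<in> carrier_mat 2 2" "B \<in> carrier_mat 2 2" "i < 2" "j < 2"
  shows "(A * B) $$ (i,j) = A $$ (i,0) * B $$ (0,j) + A $$ (i,1) * B $$ (1,j)"
  using assms by (simp add: times_mat_def scalar_prod_def sum2)

lemma adj_idx: "X \<in> carrier_mat n m \<Longrightarrow> i < m \<Longrightarrow> j < n \<Longrightarrow> adj X $$ (i,j) = cnj (X $$ (j,i))"
  by (simp add: adj_def)

lemma adj_carrier: "X \<in> carrier_mat n m \<Longrightarrow> adj X \<in> carrier_mat m n"
  by (simp add: adj_def)

lemma Mtilde_chol:
  assumes "\<bar>\<mu>\<bar> \<le> 1"
  shows "Mtilde \<mu> = adj (Lchol \<mu>) * Lchol \<mu>"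
proof -
  have s: "(sqrt (1 - \<mu>^2))^2 = 1 - \<mu>^2" using assms by (simp add: abs_square_le_1)
  have s': "complex_of_real (sqrt (1 - \<mu>^2)) * complex_of_real (sqrt (1 - \<mu>^2)) = 1 - complex_of_real \<mu> ^ 2"
    by (metis of_real_mult power2_eq_square s of_real_diff of_real_1 of_real_power)
  have s'': "complex_of_real (sqrt (1 - \<mu>*\<mu>)) * complex_of_real (sqrt (1 - \<mu>*\<mu>)) = 1 - complex_of_real \<mu> * complex_of_real \<mu>"
    using s' by (simp add: power2_eq_square)
  have C: "adj (Lchol \<mu>) \<in> carrier_mat 2 2" using Lchol_carrier adj_carrier by blast
  show ?thesis
    apply (rule mat2_eqI[OF Mtilde_carrier mult_carrier_mat[OF C Lchol_carrier]])
    by (simp_all add: mult2_idx[OF C Lchol_carrier] adj_idx[OF Lchol_carrier] Mtilde_idx Lchol_idx s'' power2_eq_square algebra_simps)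
qed

lemma mult2_e: assumes "A \<in> carrier_mat 2 2" "B \<in> carrier_mat 2 2"
  shows "(A * B) $$ (0,0) = A $$ (0,0) * B $$ (0,0) + A $$ (0,1) * B $$ (1,0)"
    "(A * B) $$ (0,1) = A $$ (0,0) * B $$ (0,1) + A $$ (0,1) * B $$ (1,1)"
    "(A * B) $$ (1,0) = A $$ (1,0) * B $$ (0,0) + A $$ (1,1) * B $$ (1,0)"
    "(A * B) $$ (1,1) = A $$ (1,0) * B $$ (0,1) + A $$ (1,1) * B $$ (1,1)"
  using mult2_idx[OF assms] by auto

lemma cM_idx: "map_mat cnj (Mtilde \<mu>) $$ (0,0) = 1" "map_mat cnj (Mtilde \<mu>) $$ (0,1) = - \<i> * \<mu>"
   "map_mat cnj (Mtilde \<mu>) $$ (1,0) = \<i> * \<mu>" "map_mat cnj (Mtilde \<mu>) $$ (1,1) = 1"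
  using Mtilde_carrier[of \<mu>] by (auto simp: Mtilde_idx)

lemma tM_idx: "transpose_mat (Mtilde \<mu>) $$ (0,0) = 1" "transpose_mat (Mtilde \<mu>) $$ (0,1) = - \<i> * \<mu>"
   "transpose_mat (Mtilde \<mu>) $$ (1,0) = \<i> * \<mu>" "transpose_mat (Mtilde \<mu>) $$ (1,1) = 1"
  using Mtilde_carrier[of \<mu>] by (auto simp: Mtilde_idx)

lemma Mtilde_conj: "map_mat cnj (Mtilde \<mu>) = transpose_mat (Mtilde \<mu>)"
  by (rule mat2_eqI) (use Mtilde_carrier[of \<mu>] in \<open>simp_all only: cM_idx tM_idx map_carrier_mat transpose_carrier_mat\<close>)

lemma Mtilde_inv1: "map_mat cnj (Mtilde \<mu>) * Mtilde \<mu> = complex_of_real (1 - \<mu>^2) \<cdot>\<^sub>m 1\<^sub>m 2"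
proof -
  have C: "map_mat cnj (Mtilde \<mu>) \<in> carrier_mat 2 2" using Mtilde_carrier by simp
  show ?thesis
    apply (rule mat2_eqI[OF mult_carrier_mat[OF C Mtilde_carrier]])
    apply simp
    by (simp_all only: mult2_e[OF C Mtilde_carrier] cM_idx Mtilde_idx, simp_all add: complex_eq_iff power2_eq_square)
qed

lemma Mtilde_inv2: "Mtilde \<mu> * map_mat cnj (Mtilde \<mu>) = complex_of_real (1 - \<mu>^2) \<cdot>\<^sub>m 1\<^sub>m 2"
proof -
  have C: "map_mat cnj (Mtilde \<mu>) \<in> carrier_mat 2 2" using Mtilde_carrier by simp
  show ?thesis
    apply (rule mat2_eqI[OF mult_carrier_mat[OF Mtilde_carrier C]])
    apply simp
    by (simp_all only: mult2_e[OF Mtilde_carrier C] cM_idx Mtilde_idx, simp_all add: complex_eq_iff power2_eq_square)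
qed

lemma A_carrier: "kron_pow (Mtilde \<mu>) k \<in> carrier_mat (2^k) (2^k)"
  by (rule kron_pow_carrier[OF Mtilde_carrier])

lemma A_conj: "map_mat cnj (kron_pow (Mtilde \<mu>) k) = transpose_mat (kron_pow (Mtilde \<mu>) k)"
  by (induction k) (auto simp: kron_map kron_transpose Mtilde_conj)

lemma A_inv1: "map_mat cnj (kron_pow (Mtilde \<mu>) k) * kron_pow (Mtilde \<mu>) k
   = complex_of_real ((1 - \<mu>^2)^k) \<cdot>\<^sub>m 1\<^sub>m (2^k)"
proof (induction k)
  case 0
  then show ?case by auto
next
  case (Suc k)
  have "map_mat cnj (kron_pow (Mtilde \<mu>) (Suc k)) * kron_pow (Mtilde \<mu>) (Suc k)
     = kron (map_mat cnj (Mtilde \<mu>)) (map_mat cnj (kron_pow (Mtilde \<mu>) k)) * kron (Mtilde \<mu>) (kron_pow (Mtilde \<mu>) k)"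
    by (simp add: kron_map)
  also have "\<dots> = kron (map_mat cnj (Mtilde \<mu>) * Mtilde \<mu>) (map_mat cnj (kron_pow (Mtilde \<mu>) k) * kron_pow (Mtilde \<mu>) k)"
    by (rule kron_mult[where m=2 and n=2 and r=2 and p="2^k" and q="2^k" and s="2^k"])
      (use Mtilde_carrier A_carrier in auto)
  also have "\<dots> = complex_of_real ((1 - \<mu>^2)^Suc k) \<cdot>\<^sub>m 1\<^sub>m (2^Suc k)"
    by (simp add: Mtilde_inv1 Suc kron_smult kron_one)
  finally show ?case .
qed

lemma A_inv2: "kron_pow (Mtilde \<mu>) k * map_mat cnj (kron_pow (Mtilde \<mu>) k)
   = complex_of_real ((1 - \<mu>^2)^k) \<cdot>\<^sub>m 1\<^sub>m (2^k)"
proof (induction k)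
  case 0
  then show ?case by auto
next
  case (Suc k)
  have "kron_pow (Mtilde \<mu>) (Suc k) * map_mat cnj (kron_pow (Mtilde \<mu>) (Suc k))
     = kron (Mtilde \<mu>) (kron_pow (Mtilde \<mu>) k) * kron (map_mat cnj (Mtilde \<mu>)) (map_mat cnj (kron_pow (Mtilde \<mu>) k))"
    by (simp add: kron_map)
  also have "\<dots> = kron (Mtilde \<mu> * map_mat cnj (Mtilde \<mu>)) (kron_pow (Mtilde \<mu>) k * map_mat cnj (kron_pow (Mtilde \<mu>) k))"
    by (rule kron_mult[where m=2 and n=2 and r=2 and p="2^k" and q="2^k" and s="2^k"])
      (use Mtilde_carrier A_carrier in auto)
  also have "\<dots> = complex_of_real ((1 - \<mu>^2)^Suc k) \<cdot>\<^sub>m 1\<^sub>m (2^Suc k)"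
    by (simp add: Mtilde_inv2 Suc kron_smult kron_one)
  finally show ?case .
qed

lemma adj_kron: "adj (kron X Y) = kron (adj X) (adj Y)"
  by (simp add: adj_def kron_map kron_transpose)

lemma A_chol:
  assumes "\<bar>\<mu>\<bar> \<le> 1"
  shows "kron_pow (Mtilde \<mu>) k = adj (kron_pow (Lchol \<mu>) k) * kron_pow (Lchol \<mu>) k"
proof (induction k)
  case 0
  have "adj (1\<^sub>m 1) = 1\<^sub>m 1" by (rule eq_matI) (auto simp: adj_def)
  then show ?case by simp
next
  case (Suc k)
  have P: "kron_pow (Lchol \<mu>) k \<in> carrier_mat (2^k) (2^k)" by (rule kron_pow_carrier[OF Lchol_carrier])
  have "kron_pow (Mtilde \<mu>) (Suc k) = kron (adj (Lchol \<mu>) * Lchol \<mu>) (adj (kron_pow (Lchol \<mu>) k) * kron_pow (Lchol \<mu>) k)"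
    using Suc Mtilde_chol[OF assms] by simp
  also have "\<dots> = kron (adj (Lchol \<mu>)) (adj (kron_pow (Lchol \<mu>) k)) * kron (Lchol \<mu>) (kron_pow (Lchol \<mu>) k)"
    by (rule kron_mult[where m=2 and n=2 and r=2 and p="2^k" and q="2^k" and s="2^k", symmetric])
      (use Lchol_carrier P adj_carrier in auto)
  also have "\<dots> = adj (kron_pow (Lchol \<mu>) (Suc k)) * kron_pow (Lchol \<mu>) (Suc k)"
    by (simp add: adj_kron)
  finally show ?case .
qed


lemma cnj_mult_mat_vec:
  assumes "P \<in> carrier_mat n m" "u \<in> carrier_vec m"
  shows "map_mat cnj P *\<^sub>v map_vec cnj u = map_vec cnj (P *\<^sub>v u)"
proof (rule eq_vecI)
  fix i assume "i < dim_vec (map_vec cnj (P *\<^sub>v u))"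
  then have i: "i < n" using assms by simp
  show "(map_mat cnj P *\<^sub>v map_vec cnj u) $ i = map_vec cnj (P *\<^sub>v u) $ i"
    using i assms by (simp add: mult_mat_vec_def scalar_prod_def cnj_sum)
qed (use assms in simp)

lemma psd_adj:
  assumes P: "P \<in> carrier_mat n n" and u: "u \<in> carrier_vec n"
  shows "Re (map_vec cnj u \<bullet> ((adj P * P) *\<^sub>v u)) \<ge> 0"
proof -
  define y where "y = P *\<^sub>v u"
  define Q where "Q = map_mat cnj P"
  have y: "y \<in> carrier_vec n" using P u y_def by simp
  have Q: "Q \<in> carrier_mat n n" using P Q_def by simp
  have cu: "map_vec cnj u \<in> carrier_vec n" using u by simp
  have "(adj P * P) *\<^sub>v u = adj P *\<^sub>v y"
    unfolding y_def by (rule assoc_mult_mat_vec) (use P u adj_carrier in auto)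
  then have "map_vec cnj u \<bullet> ((adj P * P) *\<^sub>v u) = map_vec cnj u \<bullet> (transpose_mat Q *\<^sub>v y)"
    by (simp add: adj_def Q_def)
  also have "\<dots> = (transpose_mat Q *\<^sub>v y) \<bullet> map_vec cnj u"
    by (rule comm_scalar_prod[of _ n]) (use cu Q y in auto)
  also have "\<dots> = y \<bullet> (Q *\<^sub>v map_vec cnj u)"
    by (rule transpose_vec_mult_scalar[OF Q cu y])
  also have "Q *\<^sub>v map_vec cnj u = map_vec cnj y"
    unfolding Q_def y_def by (rule cnj_mult_mat_vec[OF P u])
  finally have eq: "map_vec cnj u \<bullet> ((adj P * P) *\<^sub>v u) = (\<Sum>i\<in>{0..<n}. y $ i * cnj (y $ i))"
    using y by (simp add: scalar_prod_def)
  have "Re (\<Sum>i\<in>{0..<n}. y $ i * cnj (y $ i)) = (\<Sum>i\<in>{0..<n}. (Re (y $ i))^2 + (Im (y $ i))^2)"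
    by (simp add: Re_sum power2_eq_square)
  also have "\<dots> \<ge> 0" by (intro sum_nonneg) auto
  finally show ?thesis using eq by simp
qed


lemma smult_one_mat_vec:
  fixes v :: "'a::field vec"
  assumes "v \<in> carrier_vec n" shows "(c \<cdot>\<^sub>m 1\<^sub>m n) *\<^sub>v v = c \<cdot>\<^sub>v v"
proof -
  have "(c \<cdot>\<^sub>m 1\<^sub>m n) *\<^sub>v v = c \<cdot>\<^sub>v (1\<^sub>m n *\<^sub>v v)"
  proof (intro eq_vecI)
    fix i assume "i < dim_vec (c \<cdot>\<^sub>v (1\<^sub>m n *\<^sub>v v))"
    then have i: "i < n" by simp
    have "(\<Sum>ia\<in>{0..<n}. c * (if ia = i then 1 else 0) * v $ ia) = (\<Sum>ia\<in>{0..<n}. (if ia = i then c * v $ ia else 0))"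
      by (intro sum.cong) auto
    also have "\<dots> = c * v $ i" using i by simp
    finally show "((c \<cdot>\<^sub>m 1\<^sub>m n) *\<^sub>v v) $ i = (c \<cdot>\<^sub>v (1\<^sub>m n *\<^sub>v v)) $ i"
      using i assms by (simp add: scalar_prod_def)
  qed (use assms in simp)
  then show ?thesis using assms by simp
qed

lemma real_vec_pos:
  fixes v :: "real vec"
  assumes v: "v \<in> carrier_vec n" "v \<noteq> 0\<^sub>v n"
  shows "v \<bullet> v > 0"
proof -
  obtain i where i: "i < n" "v $ i \<noteq> 0"
    using v by (metis eq_vecI carrier_vecD index_zero_vec(1) index_zero_vec(2))
  have "v \<bullet> v = (\<Sum>j\<in>{0..<n}. v $ j * v $ j)" using v by (simp add: scalar_prod_def)
  also have "\<dots> \<ge> v $ i * v $ i"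
    by (rule member_le_sum) (use i in auto)
  finally show ?thesis using i by (smt (verit) not_real_square_gt_zero)
qed

lemma Re_quad:
  fixes A :: "complex mat" and v :: "real vec"
  assumes A: "A \<in> carrier_mat n n" and v: "v \<in> carrier_vec n"
  shows "Re (map_vec complex_of_real v \<bullet> (A *\<^sub>v map_vec complex_of_real v)) = v \<bullet> (map_mat Re A *\<^sub>v v)"
  using A v by (simp add: scalar_prod_def Re_sum sum_distrib_left mult.assoc)


lemma key_bound:
  fixes A :: "complex mat" and v :: "real vec" and cr x :: real
  assumes A: "A \<in> carrier_mat n n"
   and BT: "map_mat cnj A = transpose_mat A"
   and AB: "A * map_mat cnj A = complex_of_real cr \<cdot>\<^sub>m 1\<^sub>m n"
   and BA: "map_mat cnj A * A = complex_of_real cr \<cdot>\<^sub>m 1\<^sub>m n"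
   and psd: "\<And>u. u \<in> carrier_vec n \<Longrightarrow> Re (map_vec cnj u \<bullet> (A *\<^sub>v u)) \<ge> 0"
   and cr: "cr > 0"
   and v: "v \<in> carrier_vec n" "v \<noteq> 0\<^sub>v n"
   and ev: "map_mat Re A *\<^sub>v v = x \<cdot>\<^sub>v v"
  shows "x \<ge> sqrt cr"
proof -
  define B where "B = map_mat cnj A"
  define vc where "vc = map_vec complex_of_real v"
  define c where "c = complex_of_real cr"
  define sc where "sc = complex_of_real (sqrt cr)"
  define a where "a = A *\<^sub>v vc"
  define b where "b = B *\<^sub>v vc"
  define w where "w = a - sc \<cdot>\<^sub>v vc"
  define wb where "wb = b - sc \<cdot>\<^sub>v vc"
  have Bc: "B \<in> carrier_mat n n" using A B_def by simp
  have vcc: "vc \<in> carrier_vec n" using v vc_def by simp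
  have ac: "a \<in> carrier_vec n" using A vcc a_def by simp
  have bc: "b \<in> carrier_vec n" using Bc vcc b_def by simp
  have wc: "w \<in> carrier_vec n" using ac vcc w_def by simp
  have wbc: "wb \<in> carrier_vec n" using bc vcc wb_def by simp
  have scsc: "sc * sc = c" unfolding sc_def c_def of_real_mult[symmetric] using cr by simp
  have hvc: "map_vec cnj vc = vc" unfolding vc_def by (intro eq_vecI) auto
  have hab: "map_vec cnj a = b"
    using cnj_mult_mat_vec[OF A vcc] unfolding hvc a_def b_def B_def by simp
  have hb: "b $ i = cnj (a $ i)" if "i < n" for i
    using hab that ac by (metis carrier_vecD index_map_vec(1))
  have hw: "map_vec cnj wb = w"
  proof (intro eq_vecI)
    fix i assume "i < dim_vec w"
    then have i: "i < n" using wc by simp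
    show "map_vec cnj wb $ i = w $ i"
      using i wbc wc ac bc vcc hb[OF i] unfolding w_def wb_def sc_def vc_def by simp
  qed (use wc wbc in simp)
  have P: "Re (w \<bullet> (A *\<^sub>v wb)) \<ge> 0" using psd[OF wbc] hw by simp
  have Ab: "A *\<^sub>v b = c \<cdot>\<^sub>v vc"
  proof -
    have "A *\<^sub>v b = (A * B) *\<^sub>v vc" unfolding b_def using A Bc vcc by simp
    also have "\<dots> = c \<cdot>\<^sub>v vc" unfolding B_def AB c_def by (rule smult_one_mat_vec[OF vcc])
    finally show ?thesis .
  qed
  have Awb: "A *\<^sub>v wb = c \<cdot>\<^sub>v vc - sc \<cdot>\<^sub>v a"
    unfolding wb_def using A bc vcc Ab
    by (simp add: mult_minus_distrib_mat_vec[OF A] mult_mat_vec[OF A] a_def)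
  have aa: "a \<bullet> a = c * (vc \<bullet> vc)"
  proof -
    have At: "transpose_mat A \<in> carrier_mat n n" using A by simp
    have "a \<bullet> a = (transpose_mat (transpose_mat A) *\<^sub>v vc) \<bullet> a" unfolding a_def by simp
    also have "\<dots> = vc \<bullet> (transpose_mat A *\<^sub>v a)"
      by (rule transpose_vec_mult_scalar[OF At ac vcc])
    also have "transpose_mat A *\<^sub>v a = (B * A) *\<^sub>v vc" unfolding a_def B_def BT using A vcc by simp
    also have "\<dots> = c \<cdot>\<^sub>v vc" unfolding B_def BA c_def by (rule smult_one_mat_vec[OF vcc])
    finally show ?thesis using vcc by simp
  qed
  have av: "a \<bullet> vc = vc \<bullet> a" by (rule comm_scalar_prod[OF ac vcc])
  have "w \<bullet> (A *\<^sub>v wb) = (a - sc \<cdot>\<^sub>v vc) \<bullet> (c \<cdot>\<^sub>v vc - sc \<cdot>\<^sub>v a)"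
    unfolding Awb w_def ..
  also have "\<dots> = a \<bullet> (c \<cdot>\<^sub>v vc - sc \<cdot>\<^sub>v a) - (sc \<cdot>\<^sub>v vc) \<bullet> (c \<cdot>\<^sub>v vc - sc \<cdot>\<^sub>v a)"
    by (rule minus_scalar_prod_distrib) (use ac vcc in auto)
  also have "\<dots> = (a \<bullet> (c \<cdot>\<^sub>v vc) - a \<bullet> (sc \<cdot>\<^sub>v a)) - ((sc \<cdot>\<^sub>v vc) \<bullet> (c \<cdot>\<^sub>v vc) - (sc \<cdot>\<^sub>v vc) \<bullet> (sc \<cdot>\<^sub>v a))"
    using ac vcc by (simp add: scalar_prod_minus_distrib[of _ n])
  also have "\<dots> = c * (a \<bullet> vc) - sc * (a \<bullet> a) - (sc * c * (vc \<bullet> vc) - sc * sc * (vc \<bullet> a))"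
    using ac vcc by simp
  also have "\<dots> = 2 * c * ((vc \<bullet> a) - sc * (vc \<bullet> vc))"
    unfolding aa av scsc by (simp add: algebra_simps)
  finally have Z: "w \<bullet> (A *\<^sub>v wb) = 2 * c * ((vc \<bullet> a) - sc * (vc \<bullet> vc))" .
  have q: "Re (vc \<bullet> a) = x * (v \<bullet> v)"
    unfolding a_def vc_def Re_quad[OF A v(1)] ev using v by simp
  have N: "vc \<bullet> vc = complex_of_real (v \<bullet> v)"
    unfolding vc_def using v by (simp add: scalar_prod_def)
  have "Re (w \<bullet> (A *\<^sub>v wb)) = 2 * cr * (x * (v \<bullet> v) - sqrt cr * (v \<bullet> v))"
    unfolding Z N using q by (simp add: c_def sc_def)
  with P have "0 \<le> 2 * cr * ((x - sqrt cr) * (v \<bullet> v))" by (simp add: algebra_simps)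
  moreover have "v \<bullet> v > 0" by (rule real_vec_pos[OF v])
  ultimately have "0 \<le> x - sqrt cr" using cr
    by (simp add: zero_le_mult_iff)
  then show ?thesis by simp
qed


lemma real_sym_eigenvalue_exists:
  fixes R :: "real mat"
  assumes R: "R \<in> carrier_mat n n" and n: "n > 0" and sym: "\<And>i j. i < n \<Longrightarrow> j < n \<Longrightarrow> R $$ (j,i) = R $$ (i,j)"
  shows "\<exists>x. eigenvalue R x"
proof -
  define Rc where "Rc = map_mat complex_of_real R"
  have Rc: "Rc \<in> carrier_mat n n" using R Rc_def by simp
  have "degree (char_poly Rc) = n" using degree_monic_char_poly[OF Rc] by simp
  then have "\<not> constant (poly (char_poly Rc))" unfolding constant_degree using n by simp
  then obtain z where "poly (char_poly Rc) z = 0" using fundamental_theorem_of_algebra by blast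
  then have "eigenvalue Rc z" using eigenvalue_root_char_poly[OF Rc] by simp
  then obtain w where w: "w \<in> carrier_vec n" "w \<noteq> 0\<^sub>v n" "Rc *\<^sub>v w = z \<cdot>\<^sub>v w"
    unfolding eigenvalue_def eigenvector_def using Rc by auto
  define f where "f i j = cnj (w $ i) * complex_of_real (R $$ (i,j)) * w $ j" for i j
  define S where "S = (\<Sum>i\<in>{0..<n}. \<Sum>j\<in>{0..<n}. f i j)"
  define T where "T = (\<Sum>i\<in>{0..<n}. cnj (w $ i) * w $ i)"
  have S1: "S = z * T"
  proof -
    have "S = (\<Sum>i\<in>{0..<n}. cnj (w $ i) * (Rc *\<^sub>v w) $ i)"
      unfolding S_def f_def using Rc R w(1)
      by (intro sum.cong refl) (simp add: Rc_def scalar_prod_def sum_distrib_left mult.assoc)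
    also have "\<dots> = (\<Sum>i\<in>{0..<n}. z * (cnj (w $ i) * w $ i))"
      using w by (intro sum.cong refl) (simp add: ac_simps)
    finally show ?thesis unfolding T_def by (simp add: sum_distrib_left)
  qed
  have S2: "cnj S = S"
  proof -
    have "cnj S = (\<Sum>i\<in>{0..<n}. \<Sum>j\<in>{0..<n}. f j i)"
      unfolding S_def cnj_sum
      by (intro sum.cong refl) (simp add: f_def sym)
    also have "\<dots> = S" unfolding S_def by (rule sum.swap)
    finally show ?thesis .
  qed
  have T: "T = complex_of_real (\<Sum>i\<in>{0..<n}. (Re (w $ i))^2 + (Im (w $ i))^2)"
    unfolding T_def by (simp add: complex_eq_iff Re_sum Im_sum power2_eq_square)
  obtain i where i: "i < n" "w $ i \<noteq> 0"
    using w by (metis eq_vecI carrier_vecD index_zero_vec(1) index_zero_vec(2))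
  have "(\<Sum>i\<in>{0..<n}. (Re (w $ i))^2 + (Im (w $ i))^2) \<ge> (Re (w $ i))^2 + (Im (w $ i))^2"
    by (rule member_le_sum) (use i in auto)
  moreover have "(Re (w $ i))^2 + (Im (w $ i))^2 > 0"
    using i(2) by (simp add: complex_eq_iff sum_power2_gt_zero_iff)
  ultimately have "(\<Sum>i\<in>{0..<n}. (Re (w $ i))^2 + (Im (w $ i))^2) \<noteq> 0" by linarith
  then have T0: "T \<noteq> 0" unfolding T of_real_eq_0_iff .
  have "cnj T = T" unfolding T by simp
  then have "cnj z * T = z * T" using S1 S2 by (metis complex_cnj_mult)
  then have "cnj z = z" using T0 by simp
  then have zr: "z = complex_of_real (Re z)" by (simp add: complex_eq_iff)
  have "poly (char_poly Rc) (complex_of_real (Re z)) = 0" using \<open>poly (char_poly Rc) z = 0\<close> zr by simp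
  then have "complex_of_real (poly (char_poly R) (Re z)) = 0"
    unfolding Rc_def of_real_hom.char_poly_hom[OF R] of_real_hom.poly_map_poly .
  then have "poly (char_poly R) (Re z) = 0" by simp
  then show ?thesis using eigenvalue_root_char_poly[OF R] by blast
qed

lemma eigenvalues_finite:
  fixes R :: "real mat"
  assumes R: "R \<in> carrier_mat n n"
  shows "finite {x. eigenvalue R x}"
proof -
  have "char_poly R \<noteq> 0" using degree_monic_char_poly[OF R] by auto
  then have "finite {x. poly (char_poly R) x = 0}" by (rule poly_roots_finite)
  then show ?thesis using eigenvalue_root_char_poly[OF R] by simp
qed


theorem mainTheorem6:
  fixes \<mu> :: real and k :: nat
  assumes "-1 < \<mu>" and "\<mu> < 1"
  shows "lambda_min (Re_mat (kron_pow (Mtilde \<mu>) k)) \<ge> (1 - \<mu>\<^sup>2) powr (real k / 2)"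
proof -
  define A where "A = kron_pow (Mtilde \<mu>) k"
  define n where "n = (2::nat)^k"
  define R where "R = Re_mat A"
  define cr where "cr = (1 - \<mu>^2)^k"
  have mu1: "\<bar>\<mu>\<bar> \<le> 1" using assms by auto
  have y0: "1 - \<mu>^2 > 0" using assms by (simp add: abs_square_less_1)
  have cr0: "cr > 0" unfolding cr_def using y0 by simp
  have Ac: "A \<in> carrier_mat n n" unfolding A_def n_def by (rule A_carrier)
  have Rc: "R \<in> carrier_mat n n" unfolding R_def Re_mat_def using Ac by simp
  have n0: "n > 0" unfolding n_def by simp
  have sym: "R $$ (j,i) = R $$ (i,j)" if "i < n" "j < n" for i j
  proof -
    have "map_mat cnj A $$ (i,j) = transpose_mat A $$ (i,j)" using A_conj[of \<mu> k] unfolding A_def by simp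
    then have "cnj (A $$ (i,j)) = A $$ (j,i)" using that Ac by simp
    moreover have "Re (cnj (A $$ (i,j))) = Re (A $$ (i,j))" by simp
    ultimately have "Re (A $$ (j,i)) = Re (A $$ (i,j))" by simp
    then show ?thesis unfolding R_def Re_mat_def using that Ac by simp
  qed
  have fin: "finite {x. eigenvalue R x}" by (rule eigenvalues_finite[OF Rc])
  have ne: "{x. eigenvalue R x} \<noteq> {}" using real_sym_eigenvalue_exists[OF Rc n0 sym] by auto
  have P: "kron_pow (Lchol \<mu>) k \<in> carrier_mat n n" unfolding n_def by (rule kron_pow_carrier[OF Lchol_carrier])
  have bound: "sqrt cr \<le> x" if ev: "eigenvalue R x" for x
  proof -
    obtain v where v: "v \<in> carrier_vec n" "v \<noteq> 0\<^sub>v n" "R *\<^sub>v v = x \<cdot>\<^sub>v v"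
      using ev Rc unfolding eigenvalue_def eigenvector_def by auto
    show ?thesis
    proof (rule key_bound[OF Ac _ _ _ _ cr0 v(1) v(2)])
      show "map_mat cnj A = transpose_mat A" unfolding A_def by (rule A_conj)
      show "A * map_mat cnj A = complex_of_real cr \<cdot>\<^sub>m 1\<^sub>m n" unfolding A_def cr_def n_def by (rule A_inv2)
      show "map_mat cnj A * A = complex_of_real cr \<cdot>\<^sub>m 1\<^sub>m n" unfolding A_def cr_def n_def by (rule A_inv1)
      show "0 \<le> Re (map_vec cnj u \<bullet> (A *\<^sub>v u))" if "u \<in> carrier_vec n" for u
        unfolding A_def A_chol[OF mu1] by (rule psd_adj[OF P that])
      show "map_mat Re A *\<^sub>v v = x \<cdot>\<^sub>v v" using v(3) unfolding R_def Re_mat_def .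
    qed
  qed
  have "sqrt cr \<le> Min {x. eigenvalue R x}"
    using fin ne bound by (simp add: Min_ge_iff)
  moreover have "sqrt cr = (1 - \<mu>\<^sup>2) powr (real k / 2)"
    unfolding cr_def using y0
    by (simp add: powr_half_sqrt[symmetric] powr_realpow[symmetric] powr_powr)
  ultimately show ?thesis unfolding lambda_min_def R_def A_def by simp
qed

end
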